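(* Let $(G,\mathcal{C})$ be CER with respect to the ordering $(V_{\eta_1},\dots,V_{\eta_r})$. If $\{v,w\},\{v',w'\}\in\tilde E$ satisfy $c(v,w)=c(v',w')=k\in[r+R]\setminus F$, $\pi(v)\le\pi(w)$ and $\pi(v')\le\pi(w')$, then $c(v)=c(v')$.
   Context: $G=(V,E)$ finite simple undirected graph, $V=[p]$; coloring: vertex color classes $V_1,\dots,V_r$, edge color classes $E_{r+1},\dots,E_{r+R}$ partitioning $E$. $\tilde E=E\cup\{\{v\}:v\in V\}$, $E_i=\{\{v\}:v\in V_i\}$; $c(v,w)=k$ iff $\{v,w\}\in E_k$, $c(v)=c(v,v)$. $\pi(v)=i$ iff $v\in V_{\eta_i}$; $V_{\le i}=V_{\eta_1}\cup\dots\cup V_{\eta_i}$. $m_{v\to w}(k,h)=|\{u\in V_{\le\min(\pi(v),\pi(w))}: c(v,u)=k, c(u,w)=h\}|$, $m_{v\leftrightarrow w}(k,h)=m_{v\to w}(k,h)+m_{v\to w}(h,k)$. $F_i=\{c(v,w):\{v,w\}\in\tilde E,\ c(v)=c(w)=i\}$, $F=\bigcup_iF_i$. The ordering is a cpeo if every $v\in V_{\eta_i}$ is simplicial (neighbours form a clique) in $G[V_{\eta_i}\cup\dots\cup V_{\eta_r}]$. CER with respect to the ordering: cpeo and (M1): $c(v,w)=c(v',w')$ implies $m_{v\leftrightarrow w}=m_{v'\leftrightarrow w'}$. *)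

theory Defs
  imports Main
begin

(* A coloring is a function col on the sets in E~ = E \<union> {{v} | v \<in> V}:
   col {v} = c(v) is the vertex colour (in [r]), col {v,w} = c(v,w) the edge
   colour (in {r+1..r+R}). *)

definition Vset :: "nat \<Rightarrow> nat set" where
  "Vset p = {1..p}"

definition Etilde :: "nat \<Rightarrow> nat set set \<Rightarrow> nat set set" where
  "Etilde p E = E \<union> {{v} | v. v \<in> Vset p}"

definition colored_graph ::
  "nat \<Rightarrow> nat set set \<Rightarrow> nat \<Rightarrow> nat \<Rightarrow> (nat set \<Rightarrow> nat) \<Rightarrow> bool" where
  "colored_graph p E r R col \<longleftrightarrow>
     E \<subseteq> {{a, b} | a b. a \<in> Vset p \<and> b \<in> Vset p \<and> a \<noteq> b} \<and>
     (\<forall>v \<in> Vset p. col {v} \<in> {1..r}) \<and>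
     (\<forall>e \<in> E. col e \<in> {r+1..r+R}) \<and>
     (\<forall>i \<in> {1..r}. \<exists>v \<in> Vset p. col {v} = i) \<and>
     (\<forall>k \<in> {r+1..r+R}. \<exists>e \<in> E. col e = k)"

definition is_ordering :: "nat \<Rightarrow> (nat \<Rightarrow> nat) \<Rightarrow> bool" where
  "is_ordering r eta \<longleftrightarrow> bij_betw eta {1..r} {1..r}"

(* pi(v) = i iff v \<in> V_{eta i} *)
definition pos :: "nat \<Rightarrow> (nat \<Rightarrow> nat) \<Rightarrow> (nat set \<Rightarrow> nat) \<Rightarrow> nat \<Rightarrow> nat" where
  "pos r eta col v = inv_into {1..r} eta (col {v})"

definition m_to ::
  "nat \<Rightarrow> nat set set \<Rightarrow> nat \<Rightarrow> (nat \<Rightarrow> nat) \<Rightarrow> (nat set \<Rightarrow> nat)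
     \<Rightarrow> nat \<Rightarrow> nat \<Rightarrow> nat \<Rightarrow> nat \<Rightarrow> nat" where
  "m_to p E r eta col v w k h =
     card {u \<in> Vset p. pos r eta col u \<le> min (pos r eta col v) (pos r eta col w) \<and>
                     {v, u} \<in> Etilde p E \<and> col {v, u} = k \<and>
                     {u, w} \<in> Etilde p E \<and> col {u, w} = h}"

definition m_both ::
  "nat \<Rightarrow> nat set set \<Rightarrow> nat \<Rightarrow> (nat \<Rightarrow> nat) \<Rightarrow> (nat set \<Rightarrow> nat)
     \<Rightarrow> nat \<Rightarrow> nat \<Rightarrow> nat \<Rightarrow> nat \<Rightarrow> nat" where
  "m_both p E r eta col v w k h = m_to p E r eta col v w k h + m_to p E r eta col v w h k"

definition Fi :: "nat \<Rightarrow> nat set set \<Rightarrow> (nat set \<Rightarrow> nat) \<Rightarrow> nat \<Rightarrow> nat set" where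
  "Fi p E col i = {col {v, w} | v w. {v, w} \<in> Etilde p E \<and> col {v} = i \<and> col {w} = i}"

definition Fset :: "nat \<Rightarrow> nat set set \<Rightarrow> nat \<Rightarrow> (nat set \<Rightarrow> nat) \<Rightarrow> nat set" where
  "Fset p E r col = (\<Union>i \<in> {1..r}. Fi p E col i)"

(* colour-class perfect elimination ordering: every v \<in> V_{eta i} is simplicial
   in G[V_{eta i} \<union> ... \<union> V_{eta r}] *)
definition is_cpeo ::
  "nat \<Rightarrow> nat set set \<Rightarrow> nat \<Rightarrow> (nat \<Rightarrow> nat) \<Rightarrow> (nat set \<Rightarrow> nat) \<Rightarrow> bool" where
  "is_cpeo p E r eta col \<longleftrightarrow>
     (\<forall>v \<in> Vset p. \<forall>a \<in> Vset p. \<forall>b \<in> Vset p.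
        pos r eta col a \<ge> pos r eta col v \<and> pos r eta col b \<ge> pos r eta col v \<and>
        {v, a} \<in> E \<and> {v, b} \<in> E \<and> a \<noteq> b \<longrightarrow> {a, b} \<in> E)"

definition is_CER ::
  "nat \<Rightarrow> nat set set \<Rightarrow> nat \<Rightarrow> (nat \<Rightarrow> nat) \<Rightarrow> (nat set \<Rightarrow> nat) \<Rightarrow> bool" where
  "is_CER p E r eta col \<longleftrightarrow>
     is_cpeo p E r eta col \<and>
     (\<forall>v w v' w'. {v, w} \<in> Etilde p E \<longrightarrow> {v', w'} \<in> Etilde p E \<longrightarrow>
        col {v, w} = col {v', w'} \<longrightarrow>
        m_both p E r eta col v w = m_both p E r eta col v' w')"

end

theory Submission
  imports Defs
begin

lemma Et_cases:
  assumes "colored_graph p E r R col" "{a, b} \<in> Etilde p E"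
  shows "a \<in> Vset p \<and> b \<in> Vset p \<and> (a \<noteq> b \<longrightarrow> {a,b} \<in> E \<and> col {a,b} \<ge> r+1)"
proof -
  have sub: "E \<subseteq> {{a, b} | a b. a \<in> Vset p \<and> b \<in> Vset p \<and> a \<noteq> b}"
    and ec: "\<forall>e \<in> E. col e \<in> {r+1..r+R}" using assms(1) unfolding colored_graph_def by auto
  show ?thesis
  proof (cases "{a,b} \<in> E")
    case True
    then obtain x y where "{a,b} = {x,y}" "x \<in> Vset p" "y \<in> Vset p" using sub by blast
    then have "a \<in> Vset p \<and> b \<in> Vset p" by (auto simp: doubleton_eq_iff)
    then show ?thesis using True ec by auto
  next
    case False
    then obtain x where "{a,b} = {x}" "x \<in> Vset p" using assms(2) unfolding Etilde_def by auto
    then show ?thesis using False by auto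
  qed
qed

theorem lemma7p7:
  fixes p r R k :: nat and E :: "nat set set" and col :: "nat set \<Rightarrow> nat"
    and eta :: "nat \<Rightarrow> nat" and v w v' w' :: nat
  assumes "colored_graph p E r R col"
    and "is_ordering r eta"
    and "is_CER p E r eta col"
    and "{v, w} \<in> Etilde p E" and "{v', w'} \<in> Etilde p E"
    and "col {v, w} = k" and "col {v', w'} = k"
    and "k \<in> {1..r+R} - Fset p E r col"
    and "pos r eta col v \<le> pos r eta col w"
    and "pos r eta col v' \<le> pos r eta col w'"
  shows "col {v} = col {v'}"
proof -
  note cg = assms(1)
  have vc: "\<forall>x \<in> Vset p. col {x} \<in> {1..r}" using cg unfolding colored_graph_def by auto
  have vw: "v \<in> Vset p" "w \<in> Vset p" using Et_cases[OF cg assms(4)] by auto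
  have vw': "v' \<in> Vset p" "w' \<in> Vset p" using Et_cases[OF cg assms(5)] by auto
  have vEt: "{v} \<in> Etilde p E" using vw unfolding Etilde_def by auto
  define c where "c = col {v}"
  have cr: "c \<in> {1..r}" using vc vw c_def by auto
  let ?S = "{u \<in> Vset p. pos r eta col u \<le> min (pos r eta col v) (pos r eta col w) \<and>
                     {v, u} \<in> Etilde p E \<and> col {v, u} = c \<and>
                     {u, w} \<in> Etilde p E \<and> col {u, w} = k}"
  have "v \<in> ?S" using vw vEt assms(4,6,9) c_def by auto
  moreover have "finite ?S" unfolding Vset_def by auto
  ultimately have "card ?S > 0" using card_gt_0_iff by blast
  then have "m_to p E r eta col v w c k \<ge> 1" unfolding m_to_def by simp
  then have m1: "m_both p E r eta col v w c k \<ge> 1" unfolding m_both_def by simp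
  have cer: "\<And>a b a' b'. {a,b} \<in> Etilde p E \<Longrightarrow> {a',b'} \<in> Etilde p E \<Longrightarrow> col {a,b} = col {a',b'} \<Longrightarrow> m_both p E r eta col a b = m_both p E r eta col a' b'"
    using assms(3) unfolding is_CER_def by blast
  have "m_both p E r eta col v w = m_both p E r eta col v' w'"
    using cer[OF assms(4,5)] assms(6,7) by simp
  then have "m_both p E r eta col v' w' c k \<ge> 1" using m1 by simp
  then have "m_to p E r eta col v' w' c k \<noteq> 0 \<or> m_to p E r eta col v' w' k c \<noteq> 0"
    unfolding m_both_def by linarith
  then show ?thesis
  proof
    assume "m_to p E r eta col v' w' c k \<noteq> 0"
    then obtain u where u: "u \<in> Vset p" "{v', u} \<in> Etilde p E" "col {v', u} = c"
      unfolding m_to_def by (smt (verit) card.empty empty_Collect_eq)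
    have "u = v'"
    proof (rule ccontr)
      assume "u \<noteq> v'"
      then have "col {v',u} \<ge> r+1" using Et_cases[OF cg u(2)] by auto
      then show False using u(3) cr by auto
    qed
    then show ?thesis using u c_def by simp
  next
    assume "m_to p E r eta col v' w' k c \<noteq> 0"
    then obtain u where u: "u \<in> Vset p" "pos r eta col u \<le> min (pos r eta col v') (pos r eta col w')"
       "{u, w'} \<in> Etilde p E" "col {u, w'} = c"
      unfolding m_to_def by (smt (verit) card.empty empty_Collect_eq)
    have "u = w'"
    proof (rule ccontr)
      assume "u \<noteq> w'"
      then have "col {u,w'} \<ge> r+1" using Et_cases[OF cg u(3)] by auto
      then show False using u(4) cr by auto
    qed
    then have cw: "col {w'} = c" and pe: "pos r eta col w' = pos r eta col v'"
      using u assms(10) by auto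
    have "bij_betw (inv_into {1..r} eta) {1..r} {1..r}"
      using assms(2) unfolding is_ordering_def by (simp add: bij_betw_inv_into)
    then have inj: "inj_on (inv_into {1..r} eta) {1..r}" by (simp add: bij_betw_def)
    have "col {w'} = col {v'}"
      using inj_onD[OF inj pe[unfolded pos_def]] vc vw' by auto
    then show ?thesis using cw c_def by simp
  qed
qed

end
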